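(* There exists a persuasion instance (with a single world, a single type consisting of two agents, two actions, and $d=1$) such that for every representative set $\bar{\mathcal A}$, no optimal private policy is supported only on representative joint actions; that is, every stable private policy $\sigma:\Omega\to\Delta(\bar{\mathcal A}\times G)$ achieves strictly smaller principal utility than some stable private policy $\sigma':\Omega\to\Delta(\mathcal A\times G')$.
   Context: A persuasion instance consists of: a finite set $\Omega$ of worlds; a prior $\mu\in\Delta(\Omega)$; agents $N=\{1,\dots,n\}$; a finite action set $A$; a partition $\mathcal T$ of $N$ into nonempty sets called types; for each $T\in\mathcal T$ a utility $u_T(a,\rho\mid\omega)\in\mathbb R$ defined for $a\in A$, action profiles $\rho$, and $\omega\in\Omega$; a principal utility $u_0(\rho\mid\omega)\in\mathbb R$; and an integer $d\ge 1$ (maximum coalition size). Joint actions are $\mathbf a\in\mathcal A=A^n$; the action profile of $\mathbf a$ is $\rho_{\mathbf a}:\mathcal T\times A\to\mathbb Z_{\ge0}$, $\rho_{\mathbf a}(T,a)=|\{i\in T:a_i=a\}|$. For $i\in T$, $u_i(\mathbf a\mid\omega)=u_T(a_i,\rho_{\mathbf a}\mid\omega)$. A policy is a map $\sigma:\Omega\to\Delta(\mathcal A\times G)$ (finitely supported distributions), where $G$ is a set of tuples $\mathbf g=(g_i)_{i\in N}$; elements $s=(\mathbf a,\mathbf g)$ are meta-signals. In the private mode agent $i$ observes only $s_i=(a_i,g_i)$. Agent $i$'s posterior upon observing $s_i$ is $\Pr(\tilde{\mathbf a},\omega\mid s_i)=\mu(\omega)\,\sigma(\{s'=(\tilde{\mathbf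 a},\mathbf g'):s'_i=s_i\}\mid\omega)\big/\sum_{\omega'}\mu(\omega')\,\sigma(\{s':s'_i=s_i\}\mid\omega')$. A meta-signal $s$ is unstable if there exist a nonempty $N'\subseteq N$ with $|N'|\le d$ and actions $(a'_i)_{i\in N'}$ such that for every $i\in N'$: $\sum_{\tilde{\mathbf a},\omega}\Pr(\tilde{\mathbf a},\omega\mid s_i)\,\big(u_i(\tilde{\mathbf a}\oplus\mathbf a'\mid\omega)-u_i(\tilde{\mathbf a}\mid\omega)\big)>0$, where $\tilde{\mathbf a}\oplus\mathbf a'$ replaces $\tilde a_i$ by $a'_i$ for all $i\in N'$; otherwise $s$ is stable. A policy is stable if every meta-signal it sends with positive probability is stable. The principal's utility is $u_0(\sigma)=\sum_\omega\mu(\omega)\sum_{(\mathbf a,\mathbf g)}\sigma((\mathbf a,\mathbf g)\mid\omega)\,u_0(\rho_{\mathbf a}\mid\omega)$. An optimal private policy is a stable private policy maximizing $u_0$ among all stable private policies. A representative set $\bar{\mathcal A}\subseteq\mathcal A$ contains, for each realizable action profile $\rho$, exactly one $\bar{\mathbf a}$ with $\rho_{\bar{\mathbf a}}=\rho$. *)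

theory Defs
  imports "HOL-Probability.Probability_Mass_Function"
begin

text \<open>Joint actions are lists of length n; meta-signals are pairs
(joint action, list of per-agent extra signals g_i :: nat).\<close>

record ('w, 'a) pinst =
  Omega :: "'w set"
  mu :: "'w \<Rightarrow> real"
  nagents :: nat
  Acts :: "'a set"
  Types :: "nat set set"
  uT :: "nat set \<Rightarrow> 'a \<Rightarrow> (nat set \<Rightarrow> 'a \<Rightarrow> nat) \<Rightarrow> 'w \<Rightarrow> real"
  u0 :: "(nat set \<Rightarrow> 'a \<Rightarrow> nat) \<Rightarrow> 'w \<Rightarrow> real"
  dmax :: nat

definition valid_instance :: "('w, 'a) pinst \<Rightarrow> bool" where
  "valid_instance I \<longleftrightarrow>
     finite (Omega I) \<and> Omega I \<noteq> {} \<and> (\<forall>\<omega>\<in>Omega I. mu I \<omega> \<ge> 0) \<and>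
     (\<Sum>\<omega>\<in>Omega I. mu I \<omega>) = 1 \<and>
     nagents I \<ge> 1 \<and> finite (Acts I) \<and> Acts I \<noteq> {} \<and>
     (\<forall>T\<in>Types I. T \<noteq> {}) \<and> \<Union>(Types I) = {0..<nagents I} \<and>
     (\<forall>T\<in>Types I. \<forall>T'\<in>Types I. T \<noteq> T' \<longrightarrow> T \<inter> T' = {}) \<and>
     dmax I \<ge> 1"

definition joint_actions :: "('w, 'a) pinst \<Rightarrow> 'a list set" where
  "joint_actions I = {a. length a = nagents I \<and> set a \<subseteq> Acts I}"

definition type_of :: "('w, 'a) pinst \<Rightarrow> nat \<Rightarrow> nat set" where
  "type_of I i = (THE T. T \<in> Types I \<and> i \<in> T)"

definition profile :: "('w, 'a) pinst \<Rightarrow> 'a list \<Rightarrow> nat set \<Rightarrow> 'a \<Rightarrow> nat" where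
  "profile I a = (\<lambda>T b. if T \<in> Types I \<and> b \<in> Acts I then card {i\<in>T. a ! i = b} else 0)"

definition agent_util :: "('w, 'a) pinst \<Rightarrow> nat \<Rightarrow> 'a list \<Rightarrow> 'w \<Rightarrow> real" where
  "agent_util I i a \<omega> = uT I (type_of I i) (a ! i) (profile I a) \<omega>"

type_synonym 'a msig = "'a list \<times> nat list"

definition is_policy :: "('w, 'a) pinst \<Rightarrow> ('w \<Rightarrow> 'a msig pmf) \<Rightarrow> bool" where
  "is_policy I \<sigma> \<longleftrightarrow> (\<forall>\<omega>\<in>Omega I. finite (set_pmf (\<sigma> \<omega>)) \<and>
      set_pmf (\<sigma> \<omega>) \<subseteq> {(a, g). a \<in> joint_actions I \<and> length g = nagents I})"

definition obs :: "nat \<Rightarrow> 'a msig \<Rightarrow> 'a \<times> nat" where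
  "obs i s = (fst s ! i, snd s ! i)"

definition posterior ::
  "('w, 'a) pinst \<Rightarrow> ('w \<Rightarrow> 'a msig pmf) \<Rightarrow> nat \<Rightarrow> 'a \<times> nat \<Rightarrow> 'a list \<Rightarrow> 'w \<Rightarrow> real" where
  "posterior I \<sigma> i si a \<omega> =
     mu I \<omega> * measure_pmf.prob (\<sigma> \<omega>) {s'. fst s' = a \<and> obs i s' = si} /
     (\<Sum>\<omega>'\<in>Omega I. mu I \<omega>' * measure_pmf.prob (\<sigma> \<omega>') {s'. obs i s' = si})"

definition deviate :: "nat \<Rightarrow> 'a list \<Rightarrow> nat set \<Rightarrow> (nat \<Rightarrow> 'a) \<Rightarrow> 'a list" where
  "deviate n a N' a' = map (\<lambda>j. if j \<in> N' then a' j else a ! j) [0..<n]"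

definition unstable :: "('w, 'a) pinst \<Rightarrow> ('w \<Rightarrow> 'a msig pmf) \<Rightarrow> 'a msig \<Rightarrow> bool" where
  "unstable I \<sigma> s \<longleftrightarrow> (\<exists>N' a'. N' \<subseteq> {0..<nagents I} \<and> N' \<noteq> {} \<and> card N' \<le> dmax I \<and>
     (\<forall>i\<in>N'. a' i \<in> Acts I) \<and>
     (\<forall>i\<in>N'. (\<Sum>a\<in>joint_actions I. \<Sum>\<omega>\<in>Omega I.
         posterior I \<sigma> i (obs i s) a \<omega> *
         (agent_util I i (deviate (nagents I) a N' a') \<omega> - agent_util I i a \<omega>)) > 0))"

definition sent :: "('w, 'a) pinst \<Rightarrow> ('w \<Rightarrow> 'a msig pmf) \<Rightarrow> 'a msig \<Rightarrow> bool" where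
  "sent I \<sigma> s \<longleftrightarrow> (\<Sum>\<omega>\<in>Omega I. mu I \<omega> * pmf (\<sigma> \<omega>) s) > 0"

definition stable_private_policy :: "('w, 'a) pinst \<Rightarrow> ('w \<Rightarrow> 'a msig pmf) \<Rightarrow> bool" where
  "stable_private_policy I \<sigma> \<longleftrightarrow> is_policy I \<sigma> \<and> (\<forall>s. sent I \<sigma> s \<longrightarrow> \<not> unstable I \<sigma> s)"

definition principal_utility :: "('w, 'a) pinst \<Rightarrow> ('w \<Rightarrow> 'a msig pmf) \<Rightarrow> real" where
  "principal_utility I \<sigma> = (\<Sum>\<omega>\<in>Omega I. mu I \<omega> *
      (\<Sum>s\<in>set_pmf (\<sigma> \<omega>). pmf (\<sigma> \<omega>) s * u0 I (profile I (fst s)) \<omega>))"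

definition representative_set :: "('w, 'a) pinst \<Rightarrow> 'a list set \<Rightarrow> bool" where
  "representative_set I Abar \<longleftrightarrow> Abar \<subseteq> joint_actions I \<and>
     (\<forall>a\<in>joint_actions I. \<exists>!b. b \<in> Abar \<and> profile I b = profile I a)"

end

theory Submission imports Defs begin

definition II :: "(nat, nat) pinst" where
  "II = \<lparr>Omega = {0}, mu = (\<lambda>_. 1), nagents = 2, Acts = {0,1}, Types = {{0,1}},
    uT = (\<lambda>T a \<rho> \<omega>. if a = 1 then (if \<rho> {0,1} 1 = 1 then 1 else -1) else 0),
    u0 = (\<lambda>\<rho> \<omega>. if \<rho> {0,1} 1 = 0 then 1 else 0), dmax = 1\<rparr>"

lemma II_simps[simp]: "Omega II = {0}" "mu II = (\<lambda>_. 1)" "nagents II = 2" "Acts II = {0,1}"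
  "Types II = {{0,1}}" "dmax II = 1"
  "uT II = (\<lambda>T a \<rho> \<omega>. if a = 1 then (if \<rho> {0,1} 1 = 1 then 1 else -1) else 0)"
  "u0 II = (\<lambda>\<rho> \<omega>. if \<rho> {0,1} 1 = 0 then 1 else 0)"
  by (simp_all add: II_def)

lemma JA: "joint_actions II = {[0,0],[0,1],[1,0],[1,1]}"
  by (auto simp: joint_actions_def length_Suc_conv numeral_2_eq_2)

lemma valid: "valid_instance II"
  by (auto simp: valid_instance_def)

lemma coll2: "{i::nat. (i = 0 \<or> i = Suc 0) \<and> P i} = (if P 0 then {0} else {}) \<union> (if P (Suc 0) then {Suc 0} else {})"
  by (cases "P 0"; cases "P (Suc 0)"; safe; simp_all; metis)

lemma type_of_II: "i \<in> {0,1} \<Longrightarrow> type_of II i = {0,1}"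
  unfolding type_of_def by (rule the_equality) auto

lemma util: "i \<in> {0,1} \<Longrightarrow> agent_util II i a w =
   (if a ! i = 1 then (if card {j\<in>{0,1::nat}. a ! j = 1} = 1 then 1 else -1) else 0)"
  by (simp add: agent_util_def type_of_II profile_def)

lemma utils: 
  "agent_util II 0 [0,0] w = 0" "agent_util II 1 [0,0] w = 0"
  "agent_util II 0 [1,0] w = 1" "agent_util II 1 [0,1] w = 1"
  "agent_util II 0 [0,1] w = 0" "agent_util II 1 [1,0] w = 0"
  "agent_util II 0 [1,1] w = -1" "agent_util II 1 [1,1] w = -1"
  by (simp_all add: util coll2)

lemma utilsS: 
  "agent_util II 0 [0,0] w = 0" "agent_util II (Suc 0) [0,0] w = 0"
  "agent_util II 0 [Suc 0,0] w = 1" "agent_util II (Suc 0) [0,Suc 0] w = 1"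
  "agent_util II 0 [0,Suc 0] w = 0" "agent_util II (Suc 0) [Suc 0,0] w = 0"
  "agent_util II 0 [Suc 0,Suc 0] w = -1" "agent_util II (Suc 0) [Suc 0,Suc 0] w = -1"
  using utils by simp_all

definition S0 :: "nat msig set" where "S0 = {([0,0],[0,0]),([0,1],[0,0]),([1,0],[0,0])}"
definition sig' :: "nat \<Rightarrow> nat msig pmf" where "sig' = (\<lambda>_. pmf_of_set S0)"

lemma S0_fin[simp]: "finite S0" "S0 \<noteq> {}" by (auto simp: S0_def)

lemma N'_cases: "N' \<subseteq> {0..<2::nat} \<Longrightarrow> N' \<noteq> {} \<Longrightarrow> card N' \<le> 1 \<Longrightarrow> N' = {0} \<or> N' = {1}"
proof -
  assume a: "N' \<subseteq> {0..<2::nat}" "N' \<noteq> {}" "card N' \<le> 1"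
  have "finite N'" using a(1) finite_subset by blast
  then obtain x where "N' = {x}" using a(2,3)
    by (metis One_nat_def card_0_eq card_1_singletonE le_SucE le_zero_eq)
  thus ?thesis using a(1) by auto
qed

lemma dev: "deviate 2 [x,y] {0} a' = [a' 0, y]" "deviate 2 [x,y] {1} a' = [x, a' 1]"
  by (simp_all add: deviate_def upt_rec)
lemma devS: "deviate 2 [x,y] {Suc 0} a' = [x, a' (Suc 0)]"
  by (simp_all add: deviate_def upt_rec)

lemma post': "posterior II sig' i si a 0 = card (S0 \<inter> {s'. fst s' = a \<and> obs i s' = si}) / card (S0 \<inter> {s'. obs i s' = si})"
  by (simp add: posterior_def sig'_def measure_pmf_of_set)

lemma gain_le: "s \<in> S0 \<Longrightarrow> i \<in> {0,1} \<Longrightarrow> c \<in> {0,1} \<Longrightarrow>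
  (\<Sum>a\<in>joint_actions II. \<Sum>\<omega>\<in>Omega II.
         posterior II sig' i (obs i s) a \<omega> *
         (agent_util II i (deviate (nagents II) a {i} (\<lambda>_. c)) \<omega> - agent_util II i a \<omega>)) \<le> 0"
  apply (simp add: JA post' dev)
  apply (auto simp: S0_def obs_def dev devS utilsS Int_insert_left)
  done
lemma post_II: "posterior II \<sigma> i si a 0 = measure_pmf.prob (\<sigma> 0) {s'. fst s' = a \<and> obs i s' = si} /
   measure_pmf.prob (\<sigma> 0) {s'. obs i s' = si}"
  by (simp add: posterior_def)

lemma post_pos: "s \<in> set_pmf (\<sigma> 0) \<Longrightarrow> posterior II \<sigma> i (obs i s) (fst s) 0 > 0"
  unfolding post_II by (intro divide_pos_pos measure_pmf_posI) auto

lemma post_zero: "set_pmf (\<sigma> 0) \<inter> {s'. fst s' = a \<and> obs i s' = si} = {} \<Longrightarrow> posterior II \<sigma> i si a 0 = 0"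
  unfolding post_II by (simp add: measure_pmf_zero_iff)

lemma unst:
  assumes i: "i = 0 \<or> i = Suc 0" and b: "b = (if i = 0 then [0,Suc 0] else [Suc 0,0])"
  and nb: "\<forall>s'\<in>set_pmf (\<sigma> 0). fst s' \<noteq> b" and s: "s \<in> set_pmf (\<sigma> 0)" "fst s = [0,0]"
  shows "unstable II \<sigma> s"
proof -
  have pp: "posterior II \<sigma> i (obs i s) [0,0] 0 > 0" using post_pos[of s \<sigma> i] s by simp
  have z: "posterior II \<sigma> i (obs i s) a 0 = 0" if "a \<in> {b, [Suc 0, Suc 0], (if i = 0 then [Suc 0, 0] else [0, Suc 0])}" for a
    apply (rule post_zero)
    using that nb i s(2) by (auto simp: obs_def b split: if_splits)
  show ?thesis
    unfolding unstable_def
  proof (intro exI[of _ "{i}"] exI[of _ "\<lambda>_. Suc 0"] conjI)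
    show "(\<forall>ia\<in>{i}. 0 < (\<Sum>a\<in>joint_actions II. \<Sum>\<omega>\<in>Omega II.
            posterior II \<sigma> ia (obs ia s) a \<omega> *
            (agent_util II ia (deviate (nagents II) a {i} (\<lambda>_. Suc 0)) \<omega> - agent_util II ia a \<omega>)))"
      using i
    proof
      assume i0: "i = 0"
      have "posterior II \<sigma> 0 (obs 0 s) a 0 = 0" if "a \<in> {[0,Suc 0], [Suc 0, Suc 0], [Suc 0, 0]}" for a
        using z[of a] that i0 b by auto
      then show ?thesis using pp i0 by (simp add: JA dev utilsS)
    next
      assume i1: "i = Suc 0"
      have "posterior II \<sigma> (Suc 0) (obs (Suc 0) s) a 0 = 0" if "a \<in> {[Suc 0, 0], [Suc 0, Suc 0], [0, Suc 0]}" for a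
        using z[of a] that i1 b by auto
      then show ?thesis using pp i1 by (simp add: JA devS utilsS)
    qed
  qed (use i in auto)
qed
lemma dev_single: "deviate n a {i} a' = deviate n a {i} (\<lambda>_. a' i)"
  by (simp add: deviate_def)

lemma set_sig'[simp]: "set_pmf (sig' w) = S0" by (simp add: sig'_def)

lemma stable': "stable_private_policy II sig'"
  unfolding stable_private_policy_def
proof (intro conjI allI impI)
  show "is_policy II sig'"
    by (auto simp: is_policy_def S0_def joint_actions_def)
  fix s assume "sent II sig' s"
  hence sS: "s \<in> S0" by (simp add: sent_def sig'_def split: split_indicator_asm)
  show "\<not> unstable II sig' s"
  proof
    assume "unstable II sig' s"
    then obtain N' a' where N': "N' \<subseteq> {0..<2}" "N' \<noteq> {}" "card N' \<le> 1"
      and a': "\<forall>i\<in>N'. a' i \<in> {0,1}"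
      and g: "\<forall>i\<in>N'. (\<Sum>a\<in>joint_actions II. \<Sum>\<omega>\<in>Omega II.
         posterior II sig' i (obs i s) a \<omega> *
         (agent_util II i (deviate (nagents II) a N' a') \<omega> - agent_util II i a \<omega>)) > 0"
      unfolding unstable_def by auto
    from N'_cases[OF N'] obtain i where Ni: "N' = {i}" "i \<in> {0,1}" by auto
    have "(\<Sum>a\<in>joint_actions II. \<Sum>\<omega>\<in>Omega II.
         posterior II sig' i (obs i s) a \<omega> *
         (agent_util II i (deviate (nagents II) a {i} (\<lambda>_. a' i)) \<omega> - agent_util II i a \<omega>)) \<le> 0"
      using gain_le[OF sS Ni(2), of "a' i"] a' Ni by auto
    moreover have "(\<Sum>a\<in>joint_actions II. \<Sum>\<omega>\<in>Omega II.
         posterior II sig' i (obs i s) a \<omega> *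
         (agent_util II i (deviate (nagents II) a {i} (\<lambda>_. a' i)) \<omega> - agent_util II i a \<omega>)) > 0"
      using g Ni dev_single[of "nagents II" _ i a'] by simp
    ultimately show False by simp
  qed
qed

lemma card_prof: "a \<in> joint_actions II \<Longrightarrow> profile II a {0,1} 1 = card {j\<in>{0,1::nat}. a ! j = 1}"
  by (simp add: profile_def)

lemma PU': "principal_utility II sig' = 1/3"
proof -
  have "principal_utility II sig' = (\<Sum>s\<in>S0. 1/3 * u0 II (profile II (fst s)) 0)"
    by (simp add: principal_utility_def sig'_def) (simp add: S0_def)
  also have "\<dots> = 1/3"
    by (simp add: S0_def profile_def coll2)
  finally show ?thesis .
qed

lemma prof_eq: "profile II [0, Suc 0] = profile II [Suc 0, 0]"
proof (intro ext)
  fix T :: "nat set" and b :: nat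
  show "profile II [0, Suc 0] T b = profile II [Suc 0, 0] T b"
  proof (cases "T = {0,1} \<and> b \<in> {0,1}")
    case True
    then have T: "T = {0, Suc 0}" and b: "b = 0 \<or> b = Suc 0" by auto
    from b show ?thesis
    proof
      assume "b = 0" thus ?thesis using T by (simp add: profile_def coll2)
    next
      assume "b = Suc 0" thus ?thesis using T by (simp add: profile_def coll2)
    qed
  next
    case False
    then have "\<not> (T \<in> Types II \<and> b \<in> Acts II)" by simp
    then show ?thesis unfolding profile_def by (simp only: if_not_P if_False)
  qed
qed

lemma PU0:
  assumes pol: "is_policy II \<sigma>" and nz: "\<forall>s\<in>set_pmf (\<sigma> 0). fst s \<noteq> [0,0]"
  shows "principal_utility II \<sigma> = 0"
proof -
  have "u0 II (profile II (fst s)) 0 = 0" if "s \<in> set_pmf (\<sigma> 0)" for s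
  proof -
    have "set_pmf (\<sigma> 0) \<subseteq> {(a, g). a \<in> joint_actions II \<and> length g = nagents II}"
      using pol unfolding is_policy_def by simp
    hence "fst s \<in> joint_actions II" using that by auto
    hence "fst s \<in> {[0,0],[0,Suc 0],[Suc 0,0],[Suc 0, Suc 0]}" unfolding JA by simp
    moreover have "fst s \<noteq> [0,0]" using nz that by blast
    ultimately have "fst s \<in> {[0,Suc 0],[Suc 0,0],[Suc 0, Suc 0]}" by blast
    moreover have "u0 II (profile II a) 0 = 0" if "a \<in> {[0,Suc 0],[Suc 0,0],[Suc 0, Suc 0]}" for a
      using that by (auto simp: profile_def coll2)
    ultimately show ?thesis by blast
  qed
  thus ?thesis by (simp add: principal_utility_def)
qed

theorem proposition1:
  shows "\<exists>I :: (nat, nat) pinst.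
    valid_instance I \<and> card (Omega I) = 1 \<and> nagents I = 2 \<and> Types I = {{0, 1}} \<and>
    card (Acts I) = 2 \<and> dmax I = 1 \<and>
    (\<forall>Abar. representative_set I Abar \<longrightarrow>
      (\<forall>\<sigma>. stable_private_policy I \<sigma> \<and> (\<forall>\<omega>\<in>Omega I. \<forall>s\<in>set_pmf (\<sigma> \<omega>). fst s \<in> Abar) \<longrightarrow>
        (\<exists>\<sigma>'. stable_private_policy I \<sigma>' \<and> principal_utility I \<sigma> < principal_utility I \<sigma>')))"
proof (intro exI[of _ II] conjI allI impI)
  fix Abar \<sigma>
  assume R: "representative_set II Abar"
    and H: "stable_private_policy II \<sigma> \<and> (\<forall>\<omega>\<in>Omega II. \<forall>s\<in>set_pmf (\<sigma> \<omega>). fst s \<in> Abar)"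
  have st: "stable_private_policy II \<sigma>" using H by (rule conjunct1)
  have sup: "\<forall>s\<in>set_pmf (\<sigma> 0). fst s \<in> Abar" using H by simp
  have pol: "is_policy II \<sigma>" using st unfolding stable_private_policy_def by (rule conjunct1)
  have stb: "\<forall>s. sent II \<sigma> s \<longrightarrow> \<not> unstable II \<sigma> s" using st unfolding stable_private_policy_def by (rule conjunct2)
  have Rall: "\<forall>a\<in>joint_actions II. \<exists>!b. b \<in> Abar \<and> profile II b = profile II a"
    using R unfolding representative_set_def by (rule conjunct2)
  have notboth: "\<not> ([0, Suc 0] \<in> Abar \<and> [Suc 0, 0] \<in> Abar)"
  proof
    assume both: "[0, Suc 0] \<in> Abar \<and> [Suc 0, 0] \<in> Abar"
    have "[0, Suc 0] \<in> joint_actions II" by (simp add: JA)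
    with Rall have ex: "\<exists>!b. b \<in> Abar \<and> profile II b = profile II [0, Suc 0]" by (rule bspec)
    have e1: "(THE b. b \<in> Abar \<and> profile II b = profile II [0, Suc 0]) = [0, Suc 0]"
      by (rule the1_equality[OF ex]) (use both in simp)
    have e2: "(THE b. b \<in> Abar \<and> profile II b = profile II [0, Suc 0]) = [Suc 0, 0]"
      by (rule the1_equality[OF ex]) (use both prof_eq in simp)
    from e1 e2 have "[0, Suc 0] = [Suc 0, (0::nat)]" by simp
    thus False by simp
  qed
  have nz: "\<forall>s\<in>set_pmf (\<sigma> 0). fst s \<noteq> [0,0]"
  proof (intro ballI notI)
    fix s assume s: "s \<in> set_pmf (\<sigma> 0)" "fst s = [0,0]"
    have "pmf (\<sigma> 0) s > 0" using s(1) by (simp add: pmf_positive)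
    hence sent: "sent II \<sigma> s" by (simp add: sent_def)
    obtain i where i: "i = 0 \<or> i = Suc 0" and
      nb: "\<forall>s'\<in>set_pmf (\<sigma> 0). fst s' \<noteq> (if i = 0 then [0,Suc 0] else [Suc 0,0])"
    proof (cases "[0, Suc 0] \<in> Abar")
      case True
      hence "[Suc 0, 0] \<notin> Abar" using notboth by blast
      hence "\<forall>s'\<in>set_pmf (\<sigma> 0). fst s' \<noteq> (if Suc 0 = 0 then [0,Suc 0] else [Suc 0,0])"
        using sup by force
      thus ?thesis using that[of "Suc 0"] by blast
    next
      case False
      hence "\<forall>s'\<in>set_pmf (\<sigma> 0). fst s' \<noteq> (if (0::nat) = 0 then [0,Suc 0] else [Suc 0,0])"
        using sup by force
      thus ?thesis using that[of 0] by blast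
    qed
    have "unstable II \<sigma> s"
      by (rule unst[where b="if i = 0 then [0,Suc 0] else [Suc 0,0]" and i=i and \<sigma>=\<sigma> and s=s, OF i refl nb s])
    thus False using stb sent by blast
  qed
  have "principal_utility II \<sigma> = 0" by (rule PU0[OF pol nz])
  thus "\<exists>\<sigma>'. stable_private_policy II \<sigma>' \<and> principal_utility II \<sigma> < principal_utility II \<sigma>'"
    using stable' PU' by auto
next
  show "valid_instance II" by (rule valid)
qed simp_all
end
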